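(* Let $f\in\mathbb{Z}[x,y]$ be square-free with $n_y:=\deg_y f\ge1$, and assume $\deg_y f(\alpha,y)=n_y$ for all $\alpha\in\mathbb{C}$. Let $p$ be a prime that does not divide the leading coefficient (with respect to $y$) of $f$ and of $f_y$, and let $d_i^{(p)}:=\deg R_i^{(p)}$, with $R_i^{(p)}$ as in the context. Then $$N^-:=\sum_{i\ge1}(n_y-i)\,d_i^{(p)}\le N,$$ where $N:=\sum_{\alpha}n_\alpha$, the sum taken over all complex $x$-critical values $\alpha$ of $f$, is the total number of distinct complex points of the curve $f=0$ lying in $x$-critical fibers.
   Context: An $x$-critical value of $f$ is an $\alpha\in\mathbb{C}$ with $f(\alpha,\beta)=f_y(\alpha,\beta)=0$ for some $\beta\in\mathbb{C}$; equivalently a root of $R=\operatorname{res}(f,f_y;y)$. $n_\alpha$ is the number of distinct complex roots of $f(\alpha,y)$. Let $R^*$ be the square-free part of $R$. For polynomials $a,b$ in $y$ with coefficients in a ring $A[x]$, the $i$-th principal subresultant coefficient $\operatorname{sres}_i(a,b;y)\in A[x]$ is the coefficient of $y^i$ in the $i$-th subresultant $\operatorname{Sres}_i(a,b;y)$ (equivalently the determinant of the submatrix of the Sylvester matrix of $a,b$ w.r.t. $y$ obtained by deleting the last $i$ rows of $a$-coefficients, the last $i$ rows of $b$-coefficients and the last $2i$ columns). Let $f^{(p)}=f\bmod p$, $g^{(p)}=f_y\bmod p\in\mathbb{Z}_p[x,y]$, and $\operatorname{sr}_i^{(p)}:=\operatorname{sres}_i(f^{(p)},g^{(p)};y)\in\mathbb{Z}_p[x]$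 computed over $\mathbb{Z}_p$. Define in $\mathbb{Z}_p[x]$: $S_0^{(p)}:=R^*\bmod p$, $S_i^{(p)}:=\gcd(S_{i-1}^{(p)},\operatorname{sr}_i^{(p)})$ for $i\ge1$, and $R_i^{(p)}:=\gcd(S_0^{(p)},\dots,S_{i-1}^{(p)})/\gcd(S_0^{(p)},\dots,S_i^{(p)})$ for $i\ge1$ (gcds taken up to units; only degrees matter). *)

theory Defs
  imports "Subresultants.Subresultant" "Berlekamp_Zassenhaus.Finite_Field"
    "HOL-Computational_Algebra.Squarefree" "HOL-Computational_Algebra.Polynomial_Factorial"
begin

text \<open>Bivariate integer polynomials f(x,y) are represented as int poly poly:
  polynomials in y whose coefficients are polynomials in x.\<close>

definition eval_x :: "complex \<Rightarrow> int poly poly \<Rightarrow> complex poly" where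
  "eval_x \<alpha> F = map_poly (\<lambda>c. poly (map_poly of_int c) \<alpha>) F"

definition res_y :: "int poly poly \<Rightarrow> int poly" where
  "res_y F = resultant F (pderiv F)"

definition sqfree_part :: "int poly \<Rightarrow> int poly" where
  "sqfree_part R = primitive_part (R div gcd R (pderiv R))"

definition x_critical :: "int poly poly \<Rightarrow> complex \<Rightarrow> bool" where
  "x_critical F \<alpha> \<longleftrightarrow> (\<exists>\<beta>. poly (eval_x \<alpha> F) \<beta> = 0 \<and> poly (eval_x \<alpha> (pderiv F)) \<beta> = 0)"

definition n_fiber :: "int poly poly \<Rightarrow> complex \<Rightarrow> nat" where
  "n_fiber F \<alpha> = card {\<beta>. poly (eval_x \<alpha> F) \<beta> = 0}"

definition N_total :: "int poly poly \<Rightarrow> nat" where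
  "N_total F = (\<Sum>\<alpha>\<in>{\<alpha>. x_critical F \<alpha>}. n_fiber F \<alpha>)"

definition mod_p_poly2 :: "int poly poly \<Rightarrow> 'p::prime_card mod_ring poly poly" where
  "mod_p_poly2 F = map_poly (map_poly of_int) F"

definition sres :: "nat \<Rightarrow> 'a::comm_ring_1 poly poly \<Rightarrow> 'a poly poly \<Rightarrow> 'a poly" where
  "sres i A B = Polynomial.coeff (subresultant i A B) i"

definition sr_p :: "int poly poly \<Rightarrow> nat \<Rightarrow> 'p::prime_card mod_ring poly" where
  "sr_p F i = sres i (mod_p_poly2 F :: 'p mod_ring poly poly) (mod_p_poly2 (pderiv F))"

fun S_p :: "int poly poly \<Rightarrow> nat \<Rightarrow> 'p::prime_card mod_ring poly" where
  "S_p F 0 = map_poly of_int (sqfree_part (res_y F))"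
| "S_p F (Suc i) = gcd (S_p F i) (sr_p F (Suc i))"

definition R_p :: "int poly poly \<Rightarrow> nat \<Rightarrow> 'p::prime_card mod_ring poly" where
  "R_p F i = Gcd ((S_p F :: nat \<Rightarrow> 'p mod_ring poly) ` {0..<i}) div Gcd ((S_p F) ` {0..i})"

definition d_p :: "int poly poly \<Rightarrow> nat \<Rightarrow> 'p::prime_card itself \<Rightarrow> nat" where
  "d_p F i _ = degree (R_p F i :: 'p mod_ring poly)"

end

theory Submission
  imports Defs "Subresultants.Subresultant_Gcd" "Berlekamp_Zassenhaus.Factor_Bound" "Berlekamp_Zassenhaus.Suitable_Prime"
begin


lemma subresultant_map_poly_gen:
  assumes h: "comm_ring_hom h" and dF: "degree (map_poly h F) = degree F"
    and dG: "degree (map_poly h G) = degree G"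
  shows "map_poly h (subresultant J F G) = subresultant J (map_poly h F) (map_poly h G)"
proof -
  interpret comm_ring_hom h by fact
  interpret p: map_poly_comm_ring_hom h ..
  note d = subresultant_mat_def Let_def
  show ?thesis unfolding subresultant_def unfolding p.hom_det[symmetric]
  proof (rule arg_cong[of _ _ det], rule eq_matI, goal_cases)
    case (1 i j)
    hence ij: "i < degree F - J + (degree G - J)" "j < degree F - J + (degree G - J)"
      unfolding d dF dG by auto
    show ?case
      by (auto simp add: coeff_int_def d map_mat_def index_mat(1)[OF ij] hom_distribs dF dG)
  qed (auto simp: d dF dG)
qed

lemma subresultant_degree_le:
  assumes "J \<le> degree F" "J \<le> degree G" "(degree F - J) + (degree G - J) \<noteq> 0"
  shows "degree (subresultant J F G) \<le> J"
proof (rule degree_le, intro allI impI)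
  fix k assume k: "J < k"
  show "Polynomial.coeff (subresultant J F G) k = 0"
  proof (cases "k \<ge> degree F + (degree G - J)")
    case True
    thus ?thesis using subresultant_zero_ge[OF True assms(3)] by simp
  next
    case False
    thus ?thesis using subresultant_zero_lt[of k F G J] assms k by simp
  qed
qed

lemma subresultant_common_dvd:
  fixes F G D :: "'a :: comm_ring_1 poly"
  assumes "D dvd F" "D dvd G" "(degree F - J) + (degree G - J) \<noteq> 0"
  shows "D dvd subresultant J F G"
proof -
  define n where "n = (degree F - J) + (degree G - J)"
  have n: "n > 0" using assms(3) n_def by auto
  let ?M = "subresultant_mat J F G"
  have M: "?M \<in> carrier_mat n n" unfolding carrier_mat_def n_def by simp
  have "subresultant J F G = (\<Sum>j<n. ?M $$ (n - 1, j) * cofactor ?M (n - 1) j)"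
    unfolding subresultant_def by (rule laplace_expansion_row[OF M], insert n, auto)
  also have "D dvd \<dots>"
  proof (rule dvd_sum)
    fix j assume j: "j \<in> {..<n}"
    have "D dvd ?M $$ (n - 1, j)"
      using j n assms(1,2) unfolding n_def
      by (subst subresultant_index_mat, auto simp: Let_def)
    thus "D dvd ?M $$ (n - 1, j) * cofactor ?M (n - 1) j" by simp
  qed
  finally show ?thesis .
qed

lemma sres_nonzero_gcd_le:
  fixes F G :: "complex poly"
  assumes "J \<le> degree F" "J \<le> degree G" "(degree F - J) + (degree G - J) \<noteq> 0"
    and "Polynomial.coeff (subresultant J F G) J \<noteq> 0"
  shows "degree (gcd F G) \<le> J"
proof -
  have nz: "subresultant J F G \<noteq> 0" using assms(4) by auto
  have "gcd F G dvd subresultant J F G"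
    by (rule subresultant_common_dvd[OF _ _ assms(3)], auto)
  from dvd_imp_degree_le[OF this nz] subresultant_degree_le[OF assms(1-3)]
  show ?thesis by simp
qed

lemma complex_sqfree_decomp:
  fixes F :: "complex poly"
  assumes F: "F \<noteq> 0"
  shows "rsquarefree (F div gcd F (pderiv F)) \<and> (\<forall>a. poly (F div gcd F (pderiv F)) a = 0 \<longleftrightarrow> poly F a = 0)
    \<and> F = (F div gcd F (pderiv F)) * gcd F (pderiv F)"
proof (cases "pderiv F = 0")
  case True
  then obtain c where c: "F = [:c:]" using pderiv_iszero by blast
  with F have c0: "c \<noteq> 0" by auto
  have g: "gcd F (pderiv F) = 1" using True c c0 by (simp add: normalize_const_poly)
  show ?thesis unfolding g using c c0 by (auto simp: rsquarefree_def order_0I)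
next
  case False
  define d where "d = gcd F (pderiv F)"
  obtain r s where rs: "bezout_coefficients F (pderiv F) = (r, s)" by (cases "bezout_coefficients F (pderiv F)")
  from bezout_coefficients[OF rs] have bez: "d = r * F + s * pderiv F" unfolding d_def by simp
  have "d dvd F" unfolding d_def by simp
  hence Fq: "F = (F div d) * d" by simp
  have "d dvd pderiv F" unfolding d_def by simp
  hence Fe: "pderiv F = (pderiv F div d) * d" by simp
  from poly_squarefree_decomp[OF False Fq Fe bez]
  show ?thesis using Fq unfolding d_def by simp
qed

lemma complex_card_roots:
  fixes F :: "complex poly"
  assumes F: "F \<noteq> 0"
  shows "card {x. poly F x = 0} + degree (gcd F (pderiv F)) = degree F"
proof -
  let ?q = "F div gcd F (pderiv F)"
  note * = complex_sqfree_decomp[OF F]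
  have q0: "?q \<noteq> 0" using * F by (metis mult_zero_left)
  have g0: "gcd F (pderiv F) \<noteq> 0" using F by simp
  have "card {x. poly F x = 0} = card {x. poly ?q x = 0}" using * by simp
  also have "\<dots> = degree ?q" using rsquarefree_card_degree[OF q0] * by simp
  finally show ?thesis using degree_mult_eq[OF q0 g0] * by metis
qed

lemma complex_common_root:
  fixes F G :: "complex poly"
  assumes F: "F \<noteq> 0"
  shows "degree (gcd F G) \<noteq> 0 \<longleftrightarrow> (\<exists>b. poly F b = 0 \<and> poly G b = 0)"
proof
  assume "degree (gcd F G) \<noteq> 0"
  hence "\<not> constant (poly (gcd F G))" by (simp add: constant_degree)
  from fundamental_theorem_of_algebra[OF this] obtain b where b: "poly (gcd F G) b = 0" by auto
  have "gcd F G dvd F" "gcd F G dvd G" by auto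
  with b show "\<exists>b. poly F b = 0 \<and> poly G b = 0"
    by (metis dvdE mult_eq_0_iff poly_mult)
next
  assume "\<exists>b. poly F b = 0 \<and> poly G b = 0"
  then obtain b where b: "poly F b = 0" "poly G b = 0" by auto
  hence "[:-b,1:] dvd F" "[:-b,1:] dvd G" by (auto simp: poly_eq_0_iff_dvd)
  hence "[:-b,1:] dvd gcd F G" by auto
  from dvd_imp_degree_le[OF this] F show "degree (gcd F G) \<noteq> 0" by auto
qed

lemma gcd_int_complex:
  fixes a b :: "int poly"
  shows "\<exists>c. c \<noteq> 0 \<and> (of_int_poly (gcd a b) :: complex poly) = smult c (gcd (of_int_poly a) (of_int_poly b))"
proof (cases "gcd a b = 0")
  case True
  thus ?thesis by (intro exI[of _ 1], auto)
next
  case False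
  let ?L = "lead_coeff (gcd a b)"
  have L: "?L \<noteq> 0" using False by auto
  interpret fh: field_hom' "of_rat :: rat \<Rightarrow> complex" by unfold_locales
  have comp: "\<And>p. map_poly (of_rat :: rat \<Rightarrow> complex) (of_int_poly p) = of_int_poly p"
    by (subst map_poly_map_poly, auto simp: o_def)
  have "map_poly (of_rat :: rat \<Rightarrow> complex) (gcd (of_int_poly a) (of_int_poly b))
     = map_poly of_rat (smult (inverse (of_int ?L)) (of_int_poly (gcd a b)))"
    by (rule arg_cong[where f = "map_poly of_rat"], rule gcd_rat_to_gcd_int)
  hence "gcd (of_int_poly a) (of_int_poly b) = smult (of_rat (inverse (of_int ?L))) (of_int_poly (gcd a b) :: complex poly)"
    unfolding fh.map_poly_gcd comp by (simp add: hom_distribs comp)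
  hence "smult (of_int ?L) (gcd (of_int_poly a) (of_int_poly b)) = (of_int_poly (gcd a b) :: complex poly)"
    using L by (simp add: of_rat_inverse)
  thus ?thesis using L by (intro exI[of _ "of_int ?L"], auto)
qed

lemma degree_prod_mset_poly:
  fixes M :: "'a :: idom poly multiset"
  assumes "0 \<notin># M"
  shows "degree (prod_mset M) = sum_mset (image_mset degree M)"
  using assms
proof (induct M)
  case (add x M)
  thus ?case by (simp add: degree_mult_eq)
qed simp

lemma of_int_mod_ring_0:
  assumes "(of_int x :: 'p :: prime_card mod_ring) = 0"
  shows "int CARD('p) dvd x"
  using assms unfolding of_int_of_int_mod_ring by (transfer, auto)

lemma map_mod_p_0:
  fixes q :: "int poly"
  assumes "(map_poly of_int q :: 'p :: prime_card mod_ring poly) = 0"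
  shows "[:int CARD('p):] dvd q"
proof -
  have "\<forall>i. int CARD('p) dvd Polynomial.coeff q i"
  proof
    fix i
    have "(of_int (Polynomial.coeff q i) :: 'p mod_ring) = Polynomial.coeff (map_poly of_int q :: 'p mod_ring poly) i"
      by (simp add: coeff_map_poly)
    hence "(of_int (Polynomial.coeff q i) :: 'p mod_ring) = 0" using assms by simp
    thus "int CARD('p) dvd Polynomial.coeff q i" by (rule of_int_mod_ring_0)
  qed
  thus ?thesis by (simp add: const_poly_dvd_iff)
qed



lemma rsquarefree_smult_iff: "(c :: 'a :: idom) \<noteq> 0 \<Longrightarrow> rsquarefree (smult c p) = rsquarefree p"
  unfolding rsquarefree_def by (simp add: order_smult)

lemma rsquarefree_factor: assumes "rsquarefree (p * q :: 'a :: idom poly)" shows "rsquarefree q"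
proof -
  from assms have pq: "p * q \<noteq> 0" unfolding rsquarefree_def by auto
  hence q0: "q \<noteq> 0" by auto
  have "\<forall>a. Polynomial.order a q = 0 \<or> Polynomial.order a q = 1"
  proof
    fix a
    have "Polynomial.order a (p * q) = Polynomial.order a p + Polynomial.order a q" using order_mult[OF pq] by simp
    moreover have "Polynomial.order a (p * q) = 0 \<or> Polynomial.order a (p * q) = 1" using assms unfolding rsquarefree_def by auto
    ultimately show "Polynomial.order a q = 0 \<or> Polynomial.order a q = 1" by linarith
  qed
  thus ?thesis using q0 unfolding rsquarefree_def by auto
qed

lemma sum_mset_pos_ex: "0 < sum_mset (image_mset (h :: _ \<Rightarrow> nat) M) \<Longrightarrow> \<exists>x\<in>#M. 0 < h x"
  by (induct M) auto

lemma res_nonzero: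
  fixes f :: "int poly poly"
  assumes sf: "squarefree f" and d: "degree f \<ge> 1"
  shows "res_y f \<noteq> 0"
proof
  assume "res_y f = 0"
  hence dg: "degree (gcd f (pderiv f)) \<noteq> 0" unfolding res_y_def by (simp add: resultant_0_gcd)
  define g where "g = gcd f (pderiv f)"
  have f0: "f \<noteq> 0" using d by auto
  hence g0: "g \<noteq> 0" unfolding g_def by auto
  define M where "M = prime_factorization g"
  have 0: "0 \<notin># M" unfolding M_def using in_prime_factors_imp_prime by fastforce
  have nM: "normalize (prod_mset M) = normalize g" unfolding M_def by (rule prod_mset_prime_factorization_weak[OF g0])
  have M0: "prod_mset M \<noteq> 0" using 0 by (simp add: prod_mset_zero_iff)
  have "normalize (prod_mset M) dvd g" using nM by simp
  hence "prod_mset M dvd g" by simp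
  from dvd_imp_degree_le[OF this g0] have "degree (prod_mset M) \<le> degree g" .
  have "g dvd normalize (prod_mset M)" using nM by simp
  hence "g dvd prod_mset M" by simp
  from dvd_imp_degree_le[OF this M0] have "degree g \<le> degree (prod_mset M)" .
  hence "0 < sum_mset (image_mset degree M)" using degree_prod_mset_poly[OF 0] dg g_def by simp
  from sum_mset_pos_ex[OF this] obtain q where qM: "q \<in># M" and dq: "degree q \<noteq> 0" by auto
  have pq: "prime q" using qM unfolding M_def by (rule in_prime_factors_imp_prime)
  have "q dvd g" using qM unfolding M_def by (rule in_prime_factors_imp_dvd)
  hence qf: "q dvd f" and qf': "q dvd pderiv f" unfolding g_def by auto
  from qf obtain r where fr: "f = q * r" by (auto elim: dvdE)
  have pf: "pderiv f = q * pderiv r + pderiv q * r" unfolding fr pderiv_mult by simp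
  have "q dvd q * pderiv r" by simp
  with qf' have "q dvd pderiv q * r" unfolding pf by (simp add: dvd_add_right_iff)
  hence "q dvd pderiv q \<or> q dvd r" using pq by (simp add: prime_dvd_mult_iff)
  moreover have "\<not> q dvd pderiv q"
  proof
    assume "q dvd pderiv q"
    moreover have "pderiv q \<noteq> 0" using dq by (simp add: pderiv_eq_0_iff)
    ultimately have "degree q \<le> degree (pderiv q)" by (rule dvd_imp_degree_le)
    thus False using dq by (simp add: degree_pderiv)
  qed
  ultimately have "q dvd r" by auto
  hence "q^2 dvd f" unfolding fr power2_eq_square by auto
  with sf have "is_unit q" unfolding squarefree_def by auto
  hence "q dvd 1" by auto
  from dvd_imp_degree_le[OF this] dq show False by simp
qed

definition evh :: "complex \<Rightarrow> int poly \<Rightarrow> complex" where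
  "evh a c = poly (of_int_poly c) a"

lemma evh_hom: "idom_hom (evh a)"
  by (unfold_locales) (simp_all add: evh_def hom_distribs)

lemma eval_x_evh: "eval_x a F = map_poly (evh a) F"
  unfolding eval_x_def evh_def by simp

lemma eval_x_pderiv: "eval_x a (pderiv F) = pderiv (eval_x a F)"
  unfolding eval_x_evh using idom_hom.map_poly_pderiv[OF evh_hom] by simp

lemma evh_sres:
  assumes "degree (eval_x a F) = degree F" "degree (eval_x a G) = degree G"
  shows "evh a (sres i F G) = Polynomial.coeff (subresultant i (eval_x a F) (eval_x a G)) i"
proof -
  interpret idom_hom "evh a" by (rule evh_hom)
  have "evh a (sres i F G) = Polynomial.coeff (map_poly (evh a) (subresultant i F G)) i"
    unfolding sres_def by (simp add: coeff_map_poly)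
  also have "map_poly (evh a) (subresultant i F G) = subresultant i (eval_x a F) (eval_x a G)"
    unfolding eval_x_evh
    by (rule subresultant_map_poly_gen[OF evh_hom[unfolded idom_hom_def]]) (use assms in \<open>simp_all add: eval_x_evh\<close>)
  finally show ?thesis .
qed

fun Gz :: "int poly poly \<Rightarrow> nat \<Rightarrow> int poly" where
  "Gz f 0 = sqfree_part (res_y f)"
| "Gz f (Suc j) = gcd (Gz f j) (sres (Suc j) f (pderiv f))"



definition Aset :: "int poly poly \<Rightarrow> nat \<Rightarrow> complex set" where
  "Aset f j = {a. x_critical f a \<and> (\<exists>i\<in>{1..j}. evh a (sres i f (pderiv f)) \<noteq> 0)}"

lemma map_of_int_dvd: "a dvd b \<Longrightarrow> (map_poly (of_int :: int \<Rightarrow> 'a :: comm_ring_1) a) dvd map_poly of_int b"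
  by (auto elim!: dvdE simp: hom_distribs)

context
  fixes f :: "int poly poly"
  assumes sf: "squarefree f" and deg1: "degree f \<ge> 1"
    and degev: "\<forall>a::complex. degree (eval_x a f) = degree f"
begin

lemma deg_pderiv_f: "degree (pderiv f) = degree f - 1" by (rule degree_pderiv)

lemma deg_eval_pderiv: "degree (eval_x a (pderiv f)) = degree (pderiv f)"
  unfolding eval_x_pderiv deg_pderiv_f degree_pderiv using degev by simp

lemma eval_nz: "eval_x a f \<noteq> 0"
proof
  assume "eval_x a f = 0"
  hence "degree (eval_x a f) = 0" by simp
  thus False using degev deg1 by simp
qed

lemma R_nz: "res_y f \<noteq> 0" by (rule res_nonzero[OF sf deg1])

lemma evh_R: "evh a (res_y f) = resultant (eval_x a f) (pderiv (eval_x a f))"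
proof -
  interpret idom_hom "evh a" by (rule evh_hom)
  have "resultant (map_poly (evh a) f) (map_poly (evh a) (pderiv f)) = evh a (resultant f (pderiv f))"
    by (rule resultant_map_poly) (use degev deg_eval_pderiv in \<open>auto simp: eval_x_evh\<close>)
  thus ?thesis unfolding res_y_def eval_x_evh[symmetric] eval_x_pderiv by simp
qed

lemma crit_iff: "x_critical f a \<longleftrightarrow> poly (of_int_poly (res_y f)) a = 0"
proof -
  have "poly (of_int_poly (res_y f)) a = evh a (res_y f)" by (simp add: evh_def)
  thus ?thesis unfolding x_critical_def eval_x_pderiv
    using complex_common_root[OF eval_nz[of a], of "pderiv (eval_x a f)"]
      resultant_0_gcd[of "eval_x a f" "pderiv (eval_x a f)"] evh_R[of a] by simp
qed

lemma RC_nz: "(of_int_poly (res_y f) :: complex poly) \<noteq> 0"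
  using R_nz by simp

lemma crit_finite: "finite {a. x_critical f a}"
  unfolding crit_iff using poly_roots_finite[OF RC_nz] by simp

lemma P_props: "sqfree_part (res_y f) \<noteq> 0" "sqfree_part (res_y f) dvd res_y f"
  "content (sqfree_part (res_y f)) = 1"
proof -
  define R where "R = res_y f"
  define g where "g = gcd R (pderiv R)"
  define Q where "Q = R div g"
  have RQ: "R = Q * g" unfolding Q_def g_def by simp
  have R0: "R \<noteq> 0" using R_nz unfolding R_def .
  hence Q0: "Q \<noteq> 0" using RQ by auto
  have P: "sqfree_part (res_y f) = primitive_part Q" unfolding sqfree_part_def Q_def g_def R_def ..
  show "sqfree_part (res_y f) \<noteq> 0" unfolding P using Q0 by simp
  show "content (sqfree_part (res_y f)) = 1" unfolding P using Q0 by (simp add: content_primitive_part)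
  have "primitive_part Q dvd Q" by (metis content_times_primitive_part dvd_smult dvd_refl)
  also have "Q dvd R" unfolding RQ by simp
  finally show "sqfree_part (res_y f) dvd res_y f" unfolding P R_def .
qed

lemma P_rsf: "rsquarefree (of_int_poly (sqfree_part (res_y f)) :: complex poly)"
proof -
  define R where "R = res_y f"
  define g where "g = gcd R (pderiv R)"
  define Q where "Q = R div g"
  have RQ: "R = Q * g" unfolding Q_def g_def by simp
  have R0: "R \<noteq> 0" using R_nz unfolding R_def .
  hence Q0: "Q \<noteq> 0" using RQ by auto
  obtain c where c: "c \<noteq> 0" and gc: "(of_int_poly g :: complex poly) = smult c (gcd (of_int_poly R) (of_int_poly (pderiv R)))"
    using gcd_int_complex unfolding g_def by blast
  define RC where "RC = (of_int_poly R :: complex poly)"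
  have RC0: "RC \<noteq> 0" using R0 unfolding RC_def by simp
  have dR: "(of_int_poly (pderiv R) :: complex poly) = pderiv RC" unfolding RC_def
    by (simp add: of_int_hom.map_poly_pderiv)
  define G where "G = gcd RC (pderiv RC)"
  have G0: "G \<noteq> 0" using RC0 unfolding G_def by simp
  have "RC = of_int_poly Q * of_int_poly g" unfolding RC_def RQ by (simp add: hom_distribs)
  also have "\<dots> = smult c (of_int_poly Q) * G" unfolding gc dR G_def RC_def by simp
  finally have e1: "RC = smult c (of_int_poly Q) * G" .
  from complex_sqfree_decomp[OF RC0] have rs: "rsquarefree (RC div G)" and e2: "RC = (RC div G) * G"
    unfolding G_def by auto
  from e1 e2 G0 have "smult c (of_int_poly Q) = RC div G" by (metis mult_right_cancel)
  with rs have "rsquarefree (smult c (of_int_poly Q :: complex poly))" by simp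
  hence rsQ: "rsquarefree (of_int_poly Q :: complex poly)" using rsquarefree_smult_iff[OF c] by blast
  have cQ: "content Q \<noteq> 0" using Q0 by simp
  have "Q = smult (content Q) (primitive_part Q)" by simp
  hence "(of_int_poly Q :: complex poly) = smult (of_int (content Q)) (of_int_poly (primitive_part Q))"
    by (metis of_int_hom.map_poly_hom_smult)
  with rsQ cQ have "rsquarefree (of_int_poly (primitive_part Q) :: complex poly)"
    using rsquarefree_smult_iff[of "of_int (content Q) :: complex"] by simp
  moreover have "sqfree_part (res_y f) = primitive_part Q" unfolding sqfree_part_def Q_def g_def R_def ..
  ultimately show ?thesis by simp
qed

lemma Gz_props: "Gz f j \<noteq> 0 \<and> Gz f j dvd sqfree_part (res_y f)"
proof (induct j)
  case 0 thus ?case using P_props by simp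
next
  case (Suc j)
  thus ?case by (auto intro: dvd_trans)
qed

lemma Gz_root:
  assumes "poly (of_int_poly (sqfree_part (res_y f)) :: complex poly) a = 0"
  shows "(\<forall>i\<in>{1..j}. evh a (sres i f (pderiv f)) = 0) \<Longrightarrow> poly (of_int_poly (Gz f j) :: complex poly) a = 0"
proof (induct j)
  case 0 thus ?case using assms by simp
next
  case (Suc j)
  let ?s = "sres (Suc j) f (pderiv f)"
  from Suc have IH: "poly (of_int_poly (Gz f j) :: complex poly) a = 0" by auto
  from Suc have s: "poly (of_int_poly ?s :: complex poly) a = 0" by (auto simp: evh_def)
  obtain c where c: "(of_int_poly (gcd (Gz f j) ?s) :: complex poly) = smult c (gcd (of_int_poly (Gz f j)) (of_int_poly ?s))"
    using gcd_int_complex by blast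
  have "[:-a,1:] dvd (gcd (of_int_poly (Gz f j)) (of_int_poly ?s) :: complex poly)"
    using IH s by (simp add: poly_eq_0_iff_dvd)
  hence "poly (gcd (of_int_poly (Gz f j)) (of_int_poly ?s) :: complex poly) a = 0"
    by (simp add: poly_eq_0_iff_dvd)
  thus ?case using c by simp
qed

lemma deg_diff_le: "degree (sqfree_part (res_y f)) - degree (Gz f j) \<le> card (Aset f j)"
proof -
  define P where "P = sqfree_part (res_y f)"
  define G where "G = Gz f j"
  define H where "H = P div G"
  have G0: "G \<noteq> 0" and GP: "G dvd P" using Gz_props unfolding P_def G_def by auto
  have PGH: "P = G * H" unfolding H_def using GP by simp
  have P0: "P \<noteq> 0" using P_props unfolding P_def by auto
  hence H0: "H \<noteq> 0" using PGH by auto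
  have degH: "degree P - degree G = degree H" unfolding PGH using G0 H0 by (simp add: degree_mult_eq)
  define C where "C = (of_int_poly :: int poly \<Rightarrow> complex poly)"
  have PC: "C P = C G * C H" unfolding PGH C_def by (simp add: hom_distribs)
  have rsP: "rsquarefree (C P)" using P_rsf unfolding P_def C_def .
  have rsH: "rsquarefree (C H)" using rsP unfolding PC by (rule rsquarefree_factor)
  have HC0: "C H \<noteq> 0" "C G \<noteq> 0" using H0 G0 unfolding C_def by auto
  have "degree H = degree (C H)" unfolding C_def by simp
  also have "\<dots> = card {a. poly (C H) a = 0}" using rsquarefree_card_degree[OF HC0(1)] rsH by simp
  also have "\<dots> \<le> card (Aset f j)"
  proof (rule card_mono)
    show "finite (Aset f j)" using crit_finite unfolding Aset_def by (rule finite_subset[rotated]) auto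
    show "{a. poly (C H) a = 0} \<subseteq> Aset f j"
    proof
      fix a assume "a \<in> {a. poly (C H) a = 0}"
      hence Ha: "poly (C H) a = 0" by simp
      hence Pa: "poly (C P) a = 0" unfolding PC by simp
      have "P dvd res_y f" using P_props unfolding P_def by auto
      hence "C P dvd C (res_y f)" unfolding C_def by (rule map_of_int_dvd)
      hence "poly (C (res_y f)) a = 0" using Pa by (metis dvdE mult_eq_0_iff poly_mult)
      hence crit: "x_critical f a" using crit_iff unfolding C_def by simp
      have "\<exists>i\<in>{1..j}. evh a (sres i f (pderiv f)) \<noteq> 0"
      proof (rule ccontr)
        assume "\<not> ?thesis"
        hence "poly (C G) a = 0" using Gz_root[OF Pa[unfolded P_def C_def]] unfolding G_def C_def by auto
        hence "Polynomial.order a (C G) \<noteq> 0" "Polynomial.order a (C H) \<noteq> 0" using Ha HC0 by (auto simp: order_root)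
        moreover have "Polynomial.order a (C P) = Polynomial.order a (C G) + Polynomial.order a (C H)"
          unfolding PC by (rule order_mult, insert HC0, auto)
        ultimately have "Polynomial.order a (C P) \<ge> 2" by linarith
        moreover from rsP have "Polynomial.order a (C P) = 0 \<or> Polynomial.order a (C P) = 1"
          unfolding rsquarefree_def by blast
        ultimately show False by linarith
      qed
      thus "a \<in> Aset f j" using crit unfolding Aset_def by auto
    qed
  qed
  finally show ?thesis using degH unfolding P_def G_def by simp
qed

lemma fiber_bound:
  assumes crit: "x_critical f a"
  shows "card {j\<in>{1..<degree f}. \<exists>i\<in>{1..j}. evh a (sres i f (pderiv f)) \<noteq> 0} \<le> n_fiber f a"
proof -
  define F where "F = eval_x a f"
  define n where "n = degree f"
  have dF: "degree F = n" using degev unfolding F_def n_def by simp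
  have F0: "F \<noteq> 0" using eval_nz unfolding F_def .
  have dF': "degree (pderiv F) = n - 1" using dF by (simp add: degree_pderiv)
  define dg where "dg = degree (gcd F (pderiv F))"
  have nf: "n_fiber f a + dg = n" using complex_card_roots[OF F0] dF unfolding n_fiber_def F_def dg_def by simp
  have sub: "{j\<in>{1..<n}. \<exists>i\<in>{1..j}. evh a (sres i f (pderiv f)) \<noteq> 0} \<subseteq> {dg..<n}"
  proof
    fix j assume "j \<in> {j\<in>{1..<n}. \<exists>i\<in>{1..j}. evh a (sres i f (pderiv f)) \<noteq> 0}"
    then obtain i where j: "1 \<le> j" "j < n" and i: "1 \<le> i" "i \<le> j" and nz: "evh a (sres i f (pderiv f)) \<noteq> 0" by auto
    have "evh a (sres i f (pderiv f)) = Polynomial.coeff (subresultant i F (pderiv F)) i"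
      using evh_sres[of a f "pderiv f" i] degev deg_eval_pderiv unfolding F_def eval_x_pderiv by simp
    with nz have "Polynomial.coeff (subresultant i F (pderiv F)) i \<noteq> 0" by simp
    from sres_nonzero_gcd_le[OF _ _ _ this] have "dg \<le> i" using dF dF' i j unfolding dg_def by simp
    thus "j \<in> {dg..<n}" using i j by simp
  qed
  have "card {j\<in>{1..<n}. \<exists>i\<in>{1..j}. evh a (sres i f (pderiv f)) \<noteq> 0} \<le> card {dg..<n}"
    by (rule card_mono[OF _ sub]) simp
  also have "\<dots> = n - dg" by simp
  finally show ?thesis using nf unfolding n_def by simp
qed

lemma sum_A_le: "(\<Sum>j\<in>{1..<degree f}. card (Aset f j)) \<le> N_total f"
proof -
  define C where "C = {a. x_critical f a}"
  define J where "J = {1..<degree f}"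
  have fin: "finite C" unfolding C_def by (rule crit_finite)
  have "(\<Sum>j\<in>J. card (Aset f j)) = (\<Sum>j\<in>J. \<Sum>a\<in>C. if a \<in> Aset f j then 1 else 0)"
  proof (rule sum.cong[OF refl])
    fix j
    have "Aset f j \<subseteq> C" unfolding Aset_def C_def by auto
    hence "C \<inter> {a. a \<in> Aset f j} = Aset f j" by auto
    thus "card (Aset f j) = (\<Sum>a\<in>C. if a \<in> Aset f j then 1 else 0)"
      using fin by (simp add: sum.If_cases)
  qed
  also have "\<dots> = (\<Sum>a\<in>C. \<Sum>j\<in>J. if a \<in> Aset f j then 1 else 0)" by (rule sum.swap)
  also have "\<dots> \<le> (\<Sum>a\<in>C. n_fiber f a)"
  proof (rule sum_mono)
    fix a assume "a \<in> C"
    hence crit: "x_critical f a" unfolding C_def by simp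
    have "J \<inter> {j. a \<in> Aset f j} = {j\<in>{1..<degree f}. \<exists>i\<in>{1..j}. evh a (sres i f (pderiv f)) \<noteq> 0}"
      using crit unfolding J_def Aset_def by auto
    hence "(\<Sum>j\<in>J. if a \<in> Aset f j then 1 else 0) = card {j\<in>{1..<degree f}. \<exists>i\<in>{1..j}. evh a (sres i f (pderiv f)) \<noteq> 0}"
      unfolding J_def by (simp add: sum.If_cases)
    also have "\<dots> \<le> n_fiber f a" by (rule fiber_bound[OF crit])
    finally show "(\<Sum>j\<in>J. if a \<in> Aset f j then 1 else 0) \<le> n_fiber f a" .
  qed
  finally show ?thesis unfolding N_total_def C_def J_def .
qed

end



lemma hp_hom: "comm_ring_hom (map_poly (of_int :: int \<Rightarrow> 'a :: comm_ring_1))"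
  by (unfold_locales) (simp_all add: hom_distribs)

lemma degree_normalize_poly: "degree (normalize (p :: 'a :: {field,factorial_ring_gcd,semiring_gcd_mult_normalize} poly)) = degree p"
proof (cases "p = 0")
  case False
  have "normalize p dvd p" "p dvd normalize p" by auto
  from dvd_imp_degree_le[OF this(1) False] dvd_imp_degree_le[OF this(2)] False
  show ?thesis by auto
qed simp

lemma degree_div_dvd: assumes "b dvd a" "b \<noteq> 0" "a \<noteq> (0 :: 'a :: idom_divide poly)"
  shows "degree (a div b) = degree a - degree b"
proof -
  have a: "a = b * (a div b)" using assms by simp
  hence "a div b \<noteq> 0" using assms by auto
  from degree_mult_eq[OF assms(2) this] a show ?thesis by simp
qed

lemma telescope_aux:
  fixes s :: "nat \<Rightarrow> nat" assumes mono: "\<And>i. s (Suc i) \<le> s i"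
  shows "(\<Sum>i\<in>{1..<Suc k}. s (i - 1) - s i) = s 0 - s k \<and> s k \<le> s 0"
proof (induct k)
  case (Suc k)
  have "(\<Sum>i\<in>{1..<Suc (Suc k)}. s (i - 1) - s i) = (\<Sum>i\<in>{1..<Suc k}. s (i - 1) - s i) + (s k - s (Suc k))"
    by (subst sum.atLeastLessThan_Suc, auto)
  with Suc mono[of k] show ?case by auto
qed simp

lemma telescope:
  fixes s :: "nat \<Rightarrow> nat" assumes mono: "\<And>i. s (Suc i) \<le> s i"
  shows "(\<Sum>i\<in>{1..<m}. (m - i) * (s (i - 1) - s i)) = (\<Sum>j\<in>{1..<m}. s 0 - s j)"
proof (induct m)
  case (Suc m)
  show ?case
  proof (cases m)
    case 0 thus ?thesis by simp
  next
    case (Suc k)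
    have "(\<Sum>i\<in>{1..<Suc m}. (Suc m - i) * (s (i - 1) - s i))
       = (\<Sum>i\<in>{1..<Suc m}. (m - i) * (s (i - 1) - s i) + (s (i - 1) - s i))"
      by (rule sum.cong[OF refl], auto simp: Suc_diff_le)
    also have "\<dots> = (\<Sum>i\<in>{1..<Suc m}. (m - i) * (s (i - 1) - s i)) + (\<Sum>i\<in>{1..<Suc m}. s (i - 1) - s i)"
      by (rule sum.distrib)
    also have "(\<Sum>i\<in>{1..<Suc m}. (m - i) * (s (i - 1) - s i)) = (\<Sum>i\<in>{1..<m}. (m - i) * (s (i - 1) - s i))"
      by (subst sum.atLeastLessThan_Suc, insert Suc, auto)
    also have "(\<Sum>i\<in>{1..<Suc m}. s (i - 1) - s i) = s 0 - s m" using telescope_aux[of s m, OF mono] by blast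
    also have "(\<Sum>j\<in>{1..<Suc m}. s 0 - s j) = (\<Sum>j\<in>{1..<m}. s 0 - s j) + (s 0 - s m)"
      by (subst sum.atLeastLessThan_Suc, insert Suc, auto)
    ultimately show ?thesis using \<open>(\<Sum>i\<in>{1..<m}. (m - i) * (s (i - 1) - s i)) = (\<Sum>j\<in>{1..<m}. s 0 - s j)\<close> by simp
  qed
qed simp

context
  fixes f :: "int poly poly"
  assumes sf: "squarefree f" and deg1: "degree f \<ge> 1"
    and degev: "\<forall>a::complex. degree (eval_x a f) = degree f"
    and p1: "\<not> [:int CARD('p::prime_card):] dvd lead_coeff f"
    and p2: "\<not> [:int CARD('p):] dvd lead_coeff (pderiv f)"
begin

lemma degp_f: "degree (mod_p_poly2 f :: 'p mod_ring poly poly) = degree f"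
  unfolding mod_p_poly2_def
proof (rule map_poly_degree_eq, rule notI)
  assume "(map_poly of_int (lead_coeff f) :: 'p mod_ring poly) = 0"
  from map_mod_p_0[OF this] p1 show False by simp
qed

lemma degp_f': "degree (mod_p_poly2 (pderiv f) :: 'p mod_ring poly poly) = degree (pderiv f)"
  unfolding mod_p_poly2_def
proof (rule map_poly_degree_eq, rule notI)
  assume "(map_poly of_int (lead_coeff (pderiv f)) :: 'p mod_ring poly) = 0"
  from map_mod_p_0[OF this] p2 show False by simp
qed

lemma srp: "sr_p f i = (map_poly of_int (sres i f (pderiv f)) :: 'p mod_ring poly)"
proof -
  have "(map_poly of_int (sres i f (pderiv f)) :: 'p mod_ring poly)
     = Polynomial.coeff (map_poly (map_poly of_int) (subresultant i f (pderiv f))) i"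
    unfolding sres_def by (simp add: coeff_map_poly)
  also have "map_poly (map_poly of_int) (subresultant i f (pderiv f))
    = subresultant i (mod_p_poly2 f :: 'p mod_ring poly poly) (mod_p_poly2 (pderiv f))"
    unfolding mod_p_poly2_def
    by (rule subresultant_map_poly_gen[OF hp_hom], insert degp_f degp_f', auto simp: mod_p_poly2_def)
  finally show ?thesis unfolding sr_p_def sres_def by simp
qed

lemma S0_nz: "(S_p f 0 :: 'p mod_ring poly) \<noteq> 0"
proof
  assume "(S_p f 0 :: 'p mod_ring poly) = 0"
  hence "(map_poly of_int (sqfree_part (res_y f)) :: 'p mod_ring poly) = 0" by simp
  from map_mod_p_0[OF this] have "int CARD('p) dvd content (sqfree_part (res_y f))"
    by (simp add: const_poly_dvd_iff_dvd_content)
  hence "int CARD('p) dvd 1" using P_props[OF sf deg1 degev] by simp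
  thus False using prime_card_int[where 'a='p] by (simp add: prime_def)
qed

lemma S_nz: "(S_p f j :: 'p mod_ring poly) \<noteq> 0"
  by (induct j, insert S0_nz, auto)

lemma S_Gcd: "Gcd ((S_p f :: nat \<Rightarrow> 'p mod_ring poly) ` {0..j}) = normalize (S_p f j)"
proof (induct j)
  case (Suc j)
  have "{0..Suc j} = insert (Suc j) {0..j}" by auto
  hence "Gcd ((S_p f :: nat \<Rightarrow> 'p mod_ring poly) ` {0..Suc j}) = gcd (S_p f (Suc j)) (normalize (S_p f j))"
    using Suc by simp
  also have "\<dots> = gcd (S_p f (Suc j)) (S_p f j)" by simp
  also have "\<dots> = normalize (S_p f (Suc j))" by (rule gcd_proj1_if_dvd) simp
  finally show ?case .
qed simp

lemma dp: assumes "1 \<le> i"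
  shows "d_p f i TYPE('p) = degree (S_p f (i - 1) :: 'p mod_ring poly) - degree (S_p f i :: 'p mod_ring poly)"
proof -
  obtain k where i: "i = Suc k" using assms by (cases i, auto)
  have "{0..<Suc k} = {0..k}" by auto
  hence "R_p f i = (normalize (S_p f k) div normalize (S_p f (Suc k)) :: 'p mod_ring poly)"
    unfolding R_p_def i using S_Gcd by simp
  moreover have "degree (normalize (S_p f k) div normalize (S_p f (Suc k)) :: 'p mod_ring poly)
     = degree (S_p f k :: 'p mod_ring poly) - degree (S_p f (Suc k) :: 'p mod_ring poly)"
    by (subst degree_div_dvd, insert S_nz, auto simp: degree_normalize_poly)
  ultimately show ?thesis unfolding d_p_def i by simp
qed

lemma Gz_dvd_S: "(map_poly of_int (Gz f j) :: 'p mod_ring poly) dvd S_p f j"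
proof (induct j)
  case (Suc j)
  have "(map_poly of_int (Gz f (Suc j)) :: 'p mod_ring poly) dvd map_poly of_int (Gz f j)"
    by (rule map_of_int_dvd, simp)
  hence 1: "(map_poly of_int (Gz f (Suc j)) :: 'p mod_ring poly) dvd S_p f j" using Suc by (rule dvd_trans)
  have 2: "(map_poly of_int (Gz f (Suc j)) :: 'p mod_ring poly) dvd sr_p f (Suc j)"
    unfolding srp by (rule map_of_int_dvd, simp)
  from 1 2 show ?case by simp
qed simp

lemma S_deg: "degree (S_p f 0 :: 'p mod_ring poly) + degree (Gz f j)
   \<le> degree (S_p f j :: 'p mod_ring poly) + degree (sqfree_part (res_y f))"
proof -
  define P where "P = sqfree_part (res_y f)"
  define G where "G = Gz f j"
  define H where "H = P div G"
  have G0: "G \<noteq> 0" and GP: "G dvd P" using Gz_props[OF sf deg1 degev] unfolding P_def G_def by auto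
  have PGH: "P = G * H" unfolding H_def using GP by simp
  have P0: "P \<noteq> 0" using P_props[OF sf deg1 degev] unfolding P_def by auto
  hence H0: "H \<noteq> 0" using PGH by auto
  have degH: "degree P = degree G + degree H" unfolding PGH using G0 H0 by (simp add: degree_mult_eq)
  have "(S_p f 0 :: 'p mod_ring poly) = map_poly of_int P" by (simp add: P_def)
  also have "\<dots> = map_poly of_int G * map_poly of_int H" unfolding PGH by (simp add: hom_distribs)
  finally have "(S_p f 0 :: 'p mod_ring poly) = map_poly of_int G * map_poly of_int H" .
  hence "degree (S_p f 0 :: 'p mod_ring poly) \<le> degree (map_poly of_int G :: 'p mod_ring poly) + degree (map_poly of_int H :: 'p mod_ring poly)"
    using degree_mult_le[of "map_poly of_int G :: 'p mod_ring poly" "map_poly of_int H"] by simp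
  moreover have "degree (map_poly of_int H :: 'p mod_ring poly) \<le> degree H" by (rule degree_map_poly_le)
  moreover have "degree (map_poly of_int G :: 'p mod_ring poly) \<le> degree (S_p f j :: 'p mod_ring poly)"
    using dvd_imp_degree_le[OF Gz_dvd_S[of j] S_nz[of j]] unfolding G_def by simp
  ultimately show ?thesis using degH unfolding P_def[symmetric] G_def[symmetric] by linarith
qed

end

theorem lemma4:
  fixes f :: "int poly poly"
  assumes "squarefree f"
    and "degree f \<ge> 1"
    and "\<forall>\<alpha>::complex. degree (eval_x \<alpha> f) = degree f"
    and "\<not> [:int CARD('p::prime_card):] dvd lead_coeff f"
    and "\<not> [:int CARD('p):] dvd lead_coeff (pderiv f)"
  shows "(\<Sum>i\<in>{1..<degree f}. (degree f - i) * d_p f i TYPE('p)) \<le> N_total f"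
proof -
  note a = assms
  define s where "s j = degree (S_p f j :: 'p mod_ring poly)" for j
  define n where "n = degree f"
  define P where "P = sqfree_part (res_y f)"
  have mono: "s (Suc i) \<le> s i" for i
    unfolding s_def by (rule dvd_imp_degree_le[OF _ S_nz[OF a]], simp)
  have "(\<Sum>i\<in>{1..<n}. (n - i) * d_p f i TYPE('p)) = (\<Sum>i\<in>{1..<n}. (n - i) * (s (i - 1) - s i))"
    by (rule sum.cong[OF refl], insert dp[OF a], auto simp: s_def)
  also have "\<dots> = (\<Sum>j\<in>{1..<n}. s 0 - s j)" by (rule telescope[of s, OF mono])
  also have "\<dots> \<le> (\<Sum>j\<in>{1..<n}. degree P - degree (Gz f j))"
  proof (rule sum_mono)
    fix j
    have "Gz f j dvd P" "P \<noteq> 0" using Gz_props[OF a(1-3), of j] P_props[OF a(1-3)] unfolding P_def by auto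
    hence "degree (Gz f j) \<le> degree P" by (intro dvd_imp_degree_le)
    with S_deg[OF a, of j] show "s 0 - s j \<le> degree P - degree (Gz f j)" unfolding s_def P_def by linarith
  qed
  also have "\<dots> \<le> (\<Sum>j\<in>{1..<n}. card (Aset f j))"
    by (rule sum_mono, unfold P_def, rule deg_diff_le[OF a(1-3)])
  also have "\<dots> \<le> N_total f" unfolding n_def by (rule sum_A_le[OF a(1-3)])
  finally show ?thesis unfolding n_def .
qed

end
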